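(* Let $V$ be a complex vector space of finite dimension $N$. Let $F\in \mathrm{End}(V\otimes V)$ be an involutive symmetry and let $R=R(q)\in \mathrm{End}(V\otimes V)$ be a family of Hecke symmetries depending analytically on $q$ in a neighbourhood of $q=1$, such that $R(1)=F$ and, for each $q$, the braidings $R(q)$ and $F$ are compatible. Put $q=e^h$ and expand $$\mathcal{R}(q):=R(q)\,F = I+h\,r+O(h^2),\qquad r\in \mathrm{End}(V\otimes V).$$ Then (1) $r_{\overline{12}}+r_{\overline{21}}=2F$; (2) $[r_{\overline{12}}, r_{\overline{13}}]+[r_{\overline{12}}, r_{\overline{23}}]+[r_{\overline{13}}, r_{\overline{23}}]=0$ in $\mathrm{End}(V^{\otimes 3})$.
   Context: A braiding is an invertible $R\in\mathrm{End}(V\otimes V)$ with $(R\otimes I)(I\otimes R)(R\otimes I)=(I\otimes R)(R\otimes I)(I\otimes R)$. It is an involutive symmetry if $R^2=I$ and a Hecke symmetry if $(R-qI)(R+q^{-1}I)=0$ with $q\neq\pm1$. For $X\in\mathrm{End}(V\otimes V)$, $X_{12}=X\otimes I$, $X_{23}=I\otimes X$ in $\mathrm{End}(V^{\otimes 3})$. Two braidings $R,F$ are compatible if $R_{12}F_{23}F_{12}=F_{23}F_{12}R_{23}$ and $R_{23}F_{12}F_{23}=F_{12}F_{23}R_{12}$. Overlined indices (transfer by $F$): for $X\in\mathrm{End}(V\otimes V)$, $X_{\overline{12}}=X_{12}$, $X_{\overline{13}}=F_{23}X_{12}F_{23}^{-1}$, $X_{\overline{23}}=F_{12}F_{23}X_{12}F_{23}^{-1}F_{12}^{-1}$,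 and (since $F$ is involutive) $X_{\overline{21}}=F\,X\,F$ (acting on $V\otimes V$). $[A,B]=AB-BA$. *)

theory Defs
  imports "HOL-Analysis.Analysis" "HOL-Library.Landau_Symbols"
begin

text \<open>V = complex^'n (dimension N = CARD('n)); End(V\<otimes>V) = square matrices indexed by 'n \<times> 'n;
  End(V\<otimes>V\<otimes>V) = square matrices indexed by 'n \<times> 'n \<times> 'n.\<close>

type_synonym 'n end2 = "complex ^ ('n \<times> 'n) ^ ('n \<times> 'n)"
type_synonym 'n end3 = "complex ^ ('n \<times> 'n \<times> 'n) ^ ('n \<times> 'n \<times> 'n)"

definition kron :: "'a \<Rightarrow> 'a \<Rightarrow> complex" where
  "kron a b = (if a = b then 1 else 0)"

text \<open>X_12 = X \<otimes> I\<close>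
definition leg12 :: "('n::finite) end2 \<Rightarrow> 'n end3" where
  "leg12 X = (\<chi> a b. X $ (fst a, fst (snd a)) $ (fst b, fst (snd b)) * kron (snd (snd a)) (snd (snd b)))"

text \<open>X_23 = I \<otimes> X\<close>
definition leg23 :: "('n::finite) end2 \<Rightarrow> 'n end3" where
  "leg23 X = (\<chi> a b. kron (fst a) (fst b) * X $ (snd a) $ (snd b))"

definition braiding :: "('n::finite) end2 \<Rightarrow> bool" where
  "braiding R \<longleftrightarrow> invertible R \<and>
     leg12 R ** leg23 R ** leg12 R = leg23 R ** leg12 R ** leg23 R"

definition involutive_symmetry :: "('n::finite) end2 \<Rightarrow> bool" where
  "involutive_symmetry R \<longleftrightarrow> braiding R \<and> R ** R = mat 1"

definition scal_id :: "complex \<Rightarrow> complex ^ 'm ^ 'm" where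
  "scal_id c = (\<chi> i j. c * mat 1 $ i $ j)"

definition hecke_symmetry :: "complex \<Rightarrow> ('n::finite) end2 \<Rightarrow> bool" where
  "hecke_symmetry q R \<longleftrightarrow> braiding R \<and> q \<noteq> 1 \<and> q \<noteq> -1 \<and>
     (R - scal_id q) ** (R + scal_id (inverse q)) = 0"

definition compatible :: "('n::finite) end2 \<Rightarrow> 'n end2 \<Rightarrow> bool" where
  "compatible R F \<longleftrightarrow>
     leg12 R ** leg23 F ** leg12 F = leg23 F ** leg12 F ** leg23 R \<and>
     leg23 R ** leg12 F ** leg23 F = leg12 F ** leg23 F ** leg12 R"

definition bar12 :: "('n::finite) end2 \<Rightarrow> 'n end2 \<Rightarrow> 'n end3" where
  "bar12 F X = leg12 X"

definition bar13 :: "('n::finite) end2 \<Rightarrow> 'n end2 \<Rightarrow> 'n end3" where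
  "bar13 F X = leg23 F ** leg12 X ** matrix_inv (leg23 F)"

definition bar23 :: "('n::finite) end2 \<Rightarrow> 'n end2 \<Rightarrow> 'n end3" where
  "bar23 F X = leg12 F ** leg23 F ** leg12 X ** matrix_inv (leg23 F) ** matrix_inv (leg12 F)"

definition bar21 :: "('n::finite) end2 \<Rightarrow> 'n end2 \<Rightarrow> 'n end2" where
  "bar21 F X = F ** X ** F"

definition commut :: "('n::finite) end3 \<Rightarrow> 'n end3 \<Rightarrow> 'n end3" where
  "commut A B = A ** B - B ** A"

end

theory Submission
  imports Defs
begin


lemma mm_rdistrib: "((A::complex^'m^'n) + B) ** C = A ** C + B ** C"
  by (simp add: matrix_matrix_mult_def vec_eq_iff sum.distrib distrib_right)
lemma mm_ldistrib: "(A::complex^'m^'n) ** (B + C) = A ** B + A ** C"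
  by (rule matrix_add_ldistrib)
lemma mm_rdiff: "((A::complex^'m^'n) - B) ** C = A ** C - B ** C"
  by (simp add: matrix_matrix_mult_def vec_eq_iff sum_subtractf left_diff_distrib)
lemma mm_ldiff: "(A::complex^'m^'n) ** (B - C) = A ** B - A ** C"
  by (simp add: matrix_matrix_mult_def vec_eq_iff sum_subtractf right_diff_distrib)
lemma mm_0l[simp]: "(0::complex^'m^'n) ** A = 0"
  by (simp add: matrix_matrix_mult_def vec_eq_iff)
lemma mm_0r[simp]: "(A::complex^'m^'n) ** 0 = 0"
  by (simp add: matrix_matrix_mult_def vec_eq_iff)

definition sm :: "complex \<Rightarrow> complex^'m^'n \<Rightarrow> complex^'m^'n" where
  "sm c A = (\<chi> i j. c * A $ i $ j)"

lemma sm_nth[simp]: "sm c A $ i $ j = c * A $ i $ j" by (simp add: sm_def)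
lemma sm_mml: "sm c (A::complex^'m^'n) ** B = sm c (A ** B)"
  by (simp add: matrix_matrix_mult_def vec_eq_iff sum_distrib_left mult.assoc)
lemma sm_mmr: "(A::complex^'m^'n) ** sm c B = sm c (A ** B)"
  by (simp add: matrix_matrix_mult_def vec_eq_iff sum_distrib_left mult.left_commute)
lemma sm_sm: "sm a (sm b A) = sm (a*b) A" by (simp add: vec_eq_iff mult.assoc)
lemma sm_add: "sm a (A + B) = sm a A + sm a B" by (simp add: vec_eq_iff distrib_left)
lemma sm_diff: "sm a (A - B) = sm a A - sm a B" by (simp add: vec_eq_iff right_diff_distrib)
lemma sm_addl: "sm (a+b) A = sm a A + sm b A" by (simp add: vec_eq_iff distrib_right)
lemma sm_diffl: "sm (a-b) A = sm a A - sm b A" by (simp add: vec_eq_iff left_diff_distrib)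

lemma scal_id_sm: "scal_id c = sm c (mat 1)" by (simp add: scal_id_def sm_def)

lemma kron_sum1: "(\<Sum>k\<in>(UNIV::'a::finite set). kron a k * (kron k b * c)) = kron a b * c"
proof -
  have "(\<Sum>k\<in>UNIV. kron a k * (kron k b * c)) = (\<Sum>k\<in>UNIV. if k = a then kron a b * c else 0)"
    by (intro sum.cong) (auto simp: kron_def)
  also have "\<dots> = kron a b * c" using sum.delta[of UNIV a "\<lambda>_. kron a b * c"] by simp
  finally show ?thesis .
qed

lemma sum_UNIV2: "sum f (UNIV::('a::finite\<times>'b::finite) set) = (\<Sum>i\<in>UNIV. \<Sum>j\<in>UNIV. f (i,j))"
proof -
  have "sum f (UNIV::('a\<times>'b) set) = sum f (UNIV \<times> UNIV)" by (simp only: UNIV_Times_UNIV)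
  also have "\<dots> = (\<Sum>i\<in>UNIV. \<Sum>j\<in>UNIV. f (i,j))"
    using sum.cartesian_product[of "\<lambda>i j. f (i,j)" UNIV UNIV] by simp
  finally show ?thesis .
qed

lemma sum_UNIV3: "sum f (UNIV::('a::finite\<times>'b::finite\<times>'c::finite) set) = (\<Sum>i\<in>UNIV. \<Sum>j\<in>UNIV. \<Sum>k\<in>UNIV. f (i,j,k))"
  by (simp only: sum_UNIV2)

lemma leg12_mult: "leg12 (X ** Y) = leg12 X ** leg12 (Y::('n::finite) end2)"
proof -
  have "(leg12 X ** leg12 Y) $ a $ b = leg12 (X ** Y) $ a $ b" for a b
  proof -
    obtain a1 a2 a3 where a: "a = (a1,a2,a3)" by (cases a) auto
    obtain b1 b2 b3 where b: "b = (b1,b2,b3)" by (cases b) auto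
    have "(leg12 X ** leg12 Y) $ a $ b = (\<Sum>i\<in>UNIV. \<Sum>j\<in>UNIV. \<Sum>k\<in>UNIV.
        X $ (a1,a2) $ (i,j) * kron a3 k * (Y $ (i,j) $ (b1,b2) * kron k b3))"
      by (simp add: matrix_matrix_mult_def leg12_def a b sum_UNIV3)
    also have "\<dots> = (\<Sum>i\<in>UNIV. \<Sum>j\<in>UNIV. \<Sum>k\<in>UNIV. kron a3 k * (kron k b3 * (X $ (a1,a2) $ (i,j) * Y $ (i,j) $ (b1,b2))))"
      by (intro sum.cong refl) (simp add: mult_ac)
    also have "\<dots> = (\<Sum>i\<in>UNIV. \<Sum>j\<in>UNIV. kron a3 b3 * (X $ (a1,a2) $ (i,j) * Y $ (i,j) $ (b1,b2)))"
      by (simp only: kron_sum1)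
    also have "\<dots> = kron a3 b3 * (\<Sum>i\<in>UNIV. \<Sum>j\<in>UNIV. X $ (a1,a2) $ (i,j) * Y $ (i,j) $ (b1,b2))"
      by (simp only: sum_distrib_left)
    also have "\<dots> = leg12 (X ** Y) $ a $ b"
      by (simp add: matrix_matrix_mult_def leg12_def a b sum_UNIV2 mult.commute)
    finally show ?thesis .
  qed
  then show ?thesis by (simp add: vec_eq_iff)
qed

lemma leg23_mult: "leg23 (X ** Y) = leg23 X ** leg23 (Y::('n::finite) end2)"
proof -
  have "(leg23 X ** leg23 Y) $ a $ b = leg23 (X ** Y) $ a $ b" for a b
  proof -
    obtain a1 a2 a3 where a: "a = (a1,a2,a3)" by (cases a) auto
    obtain b1 b2 b3 where b: "b = (b1,b2,b3)" by (cases b) auto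
    have "(leg23 X ** leg23 Y) $ a $ b = (\<Sum>i\<in>UNIV. \<Sum>j\<in>UNIV. \<Sum>k\<in>UNIV.
        kron a1 i * X $ (a2,a3) $ (j,k) * (kron i b1 * Y $ (j,k) $ (b2,b3)))"
      by (simp add: matrix_matrix_mult_def leg23_def a b sum_UNIV3)
    also have "\<dots> = (\<Sum>j\<in>UNIV. \<Sum>k\<in>UNIV. \<Sum>i\<in>UNIV. kron a1 i * (kron i b1 * (X $ (a2,a3) $ (j,k) * Y $ (j,k) $ (b2,b3))))"
      by (subst sum.swap, subst (2) sum.swap) (simp add: mult_ac)
    also have "\<dots> = (\<Sum>j\<in>UNIV. \<Sum>k\<in>UNIV. kron a1 b1 * (X $ (a2,a3) $ (j,k) * Y $ (j,k) $ (b2,b3)))"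
      by (simp only: kron_sum1)
    also have "\<dots> = leg23 (X ** Y) $ a $ b"
      by (simp add: matrix_matrix_mult_def leg23_def a b sum_UNIV2 sum_distrib_left)
    finally show ?thesis .
  qed
  then show ?thesis by (simp add: vec_eq_iff)
qed

lemma leg12_one: "leg12 (mat 1 :: ('n::finite) end2) = mat 1"
  by (auto simp: vec_eq_iff leg12_def mat_def kron_def prod_eq_iff)
lemma leg23_one: "leg23 (mat 1 :: ('n::finite) end2) = mat 1"
  by (auto simp: vec_eq_iff leg23_def mat_def kron_def prod_eq_iff)
lemma leg12_add: "leg12 (X + Y) = leg12 X + leg12 (Y::('n::finite) end2)"
  by (simp add: vec_eq_iff leg12_def distrib_right)
lemma leg12_diff: "leg12 (X - Y) = leg12 X - leg12 (Y::('n::finite) end2)"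
  by (simp add: vec_eq_iff leg12_def left_diff_distrib)
lemma leg12_sm: "leg12 (sm c X) = sm c (leg12 (X::('n::finite) end2))"
  by (simp add: vec_eq_iff leg12_def mult.assoc)

lemma inv_invol: assumes "(A::complex^'m^'m) ** A = mat 1" shows "matrix_inv A = A"
proof -
  have ex: "\<exists>A'. A ** A' = mat 1 \<and> A' ** A = mat 1" using assms by blast
  define B where "B = matrix_inv A"
  have B: "A ** B = mat 1 \<and> B ** A = mat 1"
    unfolding B_def matrix_inv_def by (rule someI_ex[OF ex])
  have "B = (A ** A) ** B" using assms by simp
  also have "\<dots> = A" using B by (simp add: matrix_mul_assoc[symmetric])
  finally show ?thesis by (simp add: B_def)
qed



lemma qybe:
  fixes F R :: "('n::finite) end2"
  assumes F2: "F ** F = mat 1" and Fbr: "braiding F"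
    and Rbr: "leg12 R ** leg23 R ** leg12 R = leg23 R ** leg12 R ** leg23 R"
    and comp: "compatible R F"
  shows "leg12 (R**F) ** bar13 F (R**F) ** bar23 F (R**F) = bar23 F (R**F) ** bar13 F (R**F) ** leg12 (R**F)"
proof -
  define s1 where "s1 = leg12 F"
  define s2 where "s2 = leg23 F"
  define R1 where "R1 = leg12 R"
  define R2 where "R2 = leg23 R"
  have s11: "s1 ** s1 = mat 1" unfolding s1_def by (simp add: leg12_mult[symmetric] F2 leg12_one)
  have s22: "s2 ** s2 = mat 1" unfolding s2_def by (simp add: leg23_mult[symmetric] F2 leg23_one)
  have s11': "X ** s1 ** s1 = X" for X by (simp add: matrix_mul_assoc[symmetric] s11)
  have s22': "X ** s2 ** s2 = X" for X by (simp add: matrix_mul_assoc[symmetric] s22)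
  have inv1: "matrix_inv s1 = s1" by (rule inv_invol[OF s11])
  have inv2: "matrix_inv s2 = s2" by (rule inv_invol[OF s22])
  have br: "s1 ** s2 ** s1 = s2 ** s1 ** s2" using Fbr unfolding braiding_def s1_def s2_def by simp
  have Rb: "R1 ** R2 ** R1 = R2 ** R1 ** R2" using Rbr unfolding R1_def R2_def .
  have C1: "R1 ** s2 ** s1 = s2 ** s1 ** R2" using comp unfolding compatible_def R1_def R2_def s1_def s2_def by simp
  have C2: "R2 ** s1 ** s2 = s1 ** s2 ** R1" using comp unfolding compatible_def R1_def R2_def s1_def s2_def by simp
  have L12: "leg12 (R**F) = R1 ** s1" unfolding R1_def s1_def by (rule leg12_mult)
  have B13: "bar13 F (R**F) = s2 ** R1 ** s1 ** s2"
    unfolding bar13_def L12 s2_def[symmetric] inv2 by (simp add: matrix_mul_assoc)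
  have "bar23 F (R**F) = s1 ** s2 ** R1 ** s1 ** s2 ** s1"
    unfolding bar23_def L12 s2_def[symmetric] s1_def[symmetric] inv2 inv1 by (simp add: matrix_mul_assoc)
  also have "\<dots> = R2 ** s1 ** s1 ** s2 ** s1 ** s1"
    using arg_cong[OF C2, of "\<lambda>z. z ** s1 ** s2 ** s1"] arg_cong[OF br, of "\<lambda>z. R2 ** s1 ** z ** s1"]
    by (simp add: matrix_mul_assoc)
  also have "\<dots> = R2 ** s2" by (simp add: s11')
  finally have B23: "bar23 F (R**F) = R2 ** s2" .
  have "leg12 (R**F) ** bar13 F (R**F) ** bar23 F (R**F) = R1 ** (s1 ** s2 ** R1) ** s1 ** s2 ** R2 ** s2"
    unfolding L12 B13 B23 by (simp add: matrix_mul_assoc)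
  also have "\<dots> = R1 ** R2 ** (s1 ** s2 ** s1) ** s2 ** R2 ** s2"
    unfolding C2[symmetric] by (simp add: matrix_mul_assoc)
  also have "\<dots> = R1 ** R2 ** (s2 ** s1 ** R2) ** s2"
    unfolding br by (simp add: matrix_mul_assoc s22')
  also have "\<dots> = (R1 ** R2 ** R1) ** (s2 ** s1 ** s2)"
    unfolding C1[symmetric] by (simp add: matrix_mul_assoc)
  also have "\<dots> = (R2 ** R1 ** R2) ** (s1 ** s2 ** s1)"
    unfolding Rb br ..
  also have "\<dots> = R2 ** R1 ** (R2 ** s1 ** s2) ** s1"
    by (simp add: matrix_mul_assoc)
  also have "\<dots> = R2 ** s2 ** s2 ** R1 ** s1 ** s2 ** R1 ** s1"
    unfolding C2 by (simp add: matrix_mul_assoc s22')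
  also have "\<dots> = bar23 F (R**F) ** bar13 F (R**F) ** leg12 (R**F)"
    unfolding L12 B13 B23 by (simp add: matrix_mul_assoc)
  finally show ?thesis .
qed



definition MO :: "nat \<Rightarrow> (complex \<Rightarrow> complex^'m^'n) \<Rightarrow> bool" where
  "MO k f \<longleftrightarrow> (\<forall>i j. (\<lambda>h. f h $ i $ j) \<in> O[at 0](\<lambda>h. h^k))"

lemma MO_add: "MO k A \<Longrightarrow> MO k B \<Longrightarrow> MO k (\<lambda>h. A h + B h)"
  unfolding MO_def by (auto intro: sum_in_bigo)
lemma MO_diff: "MO k A \<Longrightarrow> MO k B \<Longrightarrow> MO k (\<lambda>h. A h - B h)"
  unfolding MO_def by (auto intro: sum_in_bigo)
lemma MO_const: "MO 0 (\<lambda>_. C)"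
  unfolding MO_def by simp
lemma MO_mult: assumes "MO a A" "MO b B" shows "MO (a+b) (\<lambda>h. A h ** B h)"
  unfolding MO_def
proof (intro allI)
  fix i j
  have "(\<lambda>h. \<Sum>k\<in>UNIV. A h $ i $ k * B h $ k $ j) \<in> O[at 0](\<lambda>h. h^a * h^b)"
    using assms unfolding MO_def by (intro big_sum_in_bigo landau_o.big.mult) auto
  then show "(\<lambda>h. (A h ** B h) $ i $ j) \<in> O[at 0](\<lambda>h. h^(a+b))"
    by (simp add: matrix_matrix_mult_def power_add)
qed
lemma ev_norm: assumes "c > 0" shows "eventually (\<lambda>h::complex. norm h < c) (at 0)"
  unfolding eventually_at using assms by (intro exI[of _ c]) (auto simp: dist_norm)

lemma pow_mono_O: assumes "b \<le> a" shows "(\<lambda>h::complex. h^a) \<in> O[at 0](\<lambda>h. h^b)"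
proof (rule bigoI[where c=1])
  have "eventually (\<lambda>h::complex. norm h < 1) (at 0)"
    by (rule ev_norm) simp
  then show "eventually (\<lambda>h::complex. norm (h^a) \<le> 1 * norm (h^b)) (at 0)"
    by eventually_elim (simp add: norm_power power_decreasing assms)
qed
lemma MO_mono: "MO a A \<Longrightarrow> b \<le> a \<Longrightarrow> MO b A"
  unfolding MO_def using pow_mono_O landau_o.big_trans by blast
lemma MO_sm: assumes "s \<in> O[at 0](\<lambda>h. h^a)" "MO b A" shows "MO (a+b) (\<lambda>h. sm (s h) (A h))"
  unfolding MO_def
proof (intro allI)
  fix i j
  have "(\<lambda>h. s h * A h $ i $ j) \<in> O[at 0](\<lambda>h. h^a * h^b)"
    using assms unfolding MO_def by (intro landau_o.big.mult) auto
  then show "(\<lambda>h. sm (s h) (A h) $ i $ j) \<in> O[at 0](\<lambda>h. h^(a+b))"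
    by (simp add: power_add)
qed
lemma MO_cong: "eventually (\<lambda>h. A h = B h) (at 0) \<Longrightarrow> MO k A \<Longrightarrow> MO k B"
  unfolding MO_def
proof (intro allI impI)
  fix i j assume a: "eventually (\<lambda>h. A h = B h) (at 0)" "\<forall>i j. (\<lambda>h. A h $ i $ j) \<in> O[at 0](\<lambda>h. h^k)"
  have "eventually (\<lambda>h. A h $ i $ j = B h $ i $ j) (at 0)" using a(1) by eventually_elim simp
  note cg = landau_o.big.in_cong[OF this, of "\<lambda>h. h^k"]
  have "(\<lambda>h. A h $ i $ j) \<in> O[at 0](\<lambda>h. h^k)" using a(2) by blast
  then show "(\<lambda>h. B h $ i $ j) \<in> O[at 0](\<lambda>h. h^k)" using cg by simp
qed
lemma MO_leg12: assumes "MO k A" shows "MO k (\<lambda>h. leg12 (A h :: ('n::finite) end2))"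
  using assms unfolding MO_def by (simp add: leg12_def)
lemma MO_T: assumes "MO k A" shows "MO k (\<lambda>h. C ** leg12 (A h :: ('n::finite) end2) ** D)"
proof -
  have "MO (0+k+0) (\<lambda>h. C ** leg12 (A h :: ('n::finite) end2) ** D)"
    by (intro MO_mult MO_const MO_leg12 assms)
  then show ?thesis by simp
qed

lemma h2_notin: "\<not> (\<lambda>h::complex. h^2) \<in> O[at 0](\<lambda>h. h^3)"
proof
  assume "(\<lambda>h::complex. h^2) \<in> O[at 0](\<lambda>h. h^3)"
  then obtain c where c: "c > 0" "eventually (\<lambda>h::complex. norm (h^2) \<le> c * norm (h^3)) (at 0)"
    by (elim landau_o.bigE)
  have "eventually (\<lambda>h::complex. norm h < 1/c) (at 0)"
    by (rule ev_norm) (use c(1) in simp)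
  moreover have "eventually (\<lambda>h::complex. h \<noteq> 0) (at 0)"
    by (simp add: eventually_at_filter)
  ultimately have "eventually (\<lambda>h::complex. False) (at 0)"
    using c(2)
  proof eventually_elim
    case (elim h)
    have "norm h ^ 2 \<le> c * norm h ^ 3" using elim(3) by (simp add: norm_power)
    then have "1 \<le> c * norm h" using elim(2)
      by (simp add: power2_eq_square power3_eq_cube)
    moreover have "c * norm h < 1" using elim(1) c(1) by (simp add: field_simps)
    ultimately show False by simp
  qed
  then show False by simp
qed

lemma MO3_zero: assumes "MO 3 (\<lambda>h. sm (h^2) K)" shows "K = 0"
proof -
  have "K $ i $ j = 0" for i j
  proof -
    have "(\<lambda>h. h^2 * K $ i $ j) \<in> O[at 0](\<lambda>h. h^3)" using assms unfolding MO_def sm_nth by blast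
    then show ?thesis using h2_notin cmult_in_bigo_iff'[of "\<lambda>h. h^2" "K $ i $ j"] by blast
  qed
  then show ?thesis by (simp add: vec_eq_iff)
qed

lemma h_notin: "\<not> (\<lambda>h::complex. h) \<in> o[at 0](\<lambda>h. h)"
proof
  assume "(\<lambda>h::complex. h) \<in> o[at 0](\<lambda>h. h)"
  from landau_o.smallD[OF this, of "1/2"]
  have "eventually (\<lambda>h::complex. norm h \<le> 1/2 * norm h) (at 0)" by simp
  moreover have "eventually (\<lambda>h::complex. h \<noteq> 0) (at 0)"
    by (simp add: eventually_at_filter)
  ultimately have "eventually (\<lambda>h::complex. False) (at 0)"
    by eventually_elim simp
  then show False by simp
qed

lemma h2_small: "(\<lambda>h::complex. h^2) \<in> o[at 0](\<lambda>h. h)"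
proof (rule smalloI_tendsto)
  have "((\<lambda>h::complex. h) \<longlongrightarrow> 0) (at 0)" by (rule tendsto_ident_at)
  moreover have "eventually (\<lambda>h::complex. h = h^2 / h) (at 0)"
    by (auto simp: eventually_at_filter power2_eq_square)
  ultimately show "((\<lambda>h::complex. h^2 / h) \<longlongrightarrow> 0) (at 0)"
    by (rule Lim_transform_eventually)
  show "eventually (\<lambda>h::complex. h \<noteq> 0) (at 0)" by (simp add: eventually_at_filter)
qed

lemma exp_small: "(\<lambda>h::complex. exp h - inverse (exp h) - h - h) \<in> o[at 0](\<lambda>h. h)"
proof (rule smalloI_tendsto)
  define f where "f = (\<lambda>h::complex. exp h - exp (-h))"
  have d: "(f has_field_derivative 2) (at 0)"
    unfolding f_def by (rule derivative_eq_intros refl | simp)+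
  then have "((\<lambda>h. (f (0 + h) - f 0) / h) \<longlongrightarrow> 2) (at 0)" by (simp add: DERIV_def)
  then have "((\<lambda>h. f h / h - 2) \<longlongrightarrow> 0) (at 0)"
    using tendsto_diff[of _ 2 _ "\<lambda>_. 2" 2] by (simp add: f_def)
  moreover have "eventually (\<lambda>h. f h / h - 2 = (exp h - inverse (exp h) - h - h) / h) (at 0)"
    by (auto simp: eventually_at_filter f_def exp_minus field_simps)
  ultimately show "((\<lambda>h::complex. (exp h - inverse (exp h) - h - h) / h) \<longlongrightarrow> 0) (at 0)"
    by (rule Lim_transform_eventually)
  show "eventually (\<lambda>h::complex. h \<noteq> 0) (at 0)" by (simp add: eventually_at_filter)
qed

lemma ev_exp: assumes "e > 0" shows "eventually (\<lambda>h. exp h \<in> ball 1 e \<and> exp h \<noteq> 1) (at (0::complex))"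
proof -
  have "((\<lambda>h::complex. exp h) \<longlongrightarrow> exp 0) (at 0)"
    by (intro tendsto_intros)
  then have "eventually (\<lambda>h::complex. dist (exp h) 1 < e) (at 0)"
    using tendstoD assms by fastforce
  moreover have "eventually (\<lambda>h::complex. norm h < 1) (at 0)"
    by (rule ev_norm) simp
  moreover have "eventually (\<lambda>h::complex. h \<noteq> 0) (at 0)" by (simp add: eventually_at_filter)
  ultimately show ?thesis
  proof eventually_elim
    case (elim h)
    have "exp h \<noteq> 1"
    proof
      assume "exp h = 1"
      then obtain n :: int where n: "Re h = 0" "Im h = of_int (2*n) * pi" by (auto simp: exp_eq_1)
      have "\<bar>Im h\<bar> < 1" using elim(2) abs_Im_le_cmod[of h] by linarith
      then have "\<bar>of_int (2*n) * pi\<bar> < 1" using n by simp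
      then have hn: "\<bar>real_of_int n\<bar> * (2*pi) < 1" by (simp add: abs_mult)
      have "n = 0"
      proof (rule ccontr)
        assume "n \<noteq> 0"
        then have "1 \<le> \<bar>real_of_int n\<bar>" by linarith
        then have "1 * (2*pi) \<le> \<bar>real_of_int n\<bar> * (2*pi)" by (intro mult_right_mono) auto
        then show False using hn pi_gt3 by linarith
      qed
      then have "h = 0" using n by (simp add: complex_eq_iff)
      then show False using elim(3) by simp
    qed
    then show ?case using elim(1) by (simp add: dist_commute)
  qed
qed



definition TT :: "('n::finite) end3 \<Rightarrow> 'n end3 \<Rightarrow> 'n end2 \<Rightarrow> 'n end3" where
  "TT C D X = C ** leg12 X ** D"

lemma TT_lin: "TT C D (X - sm c Y) = TT C D X - sm c (TT C D Y)"
  by (simp add: TT_def leg12_diff leg12_sm mm_rdiff mm_ldiff sm_mml sm_mmr)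

lemma ag1: fixes a b f x y z u v :: "'a::ab_group_add"
  shows "a + b - (f + f) - ((a - x) + (b - y) - z + v + (u - f - f)) = (x + y + z) - (u + v)"
  by (simp add: algebra_simps)

lemma sm_one: "sm 1 A = A" by (simp add: vec_eq_iff)

lemma MO_eqk: "MO a f \<Longrightarrow> a = b \<Longrightarrow> MO b f" by simp

lemma prod2_MO:
  assumes "MO 1 x" "MO 1 y" "MO 2 (\<lambda>h. x h - sm h a)" "MO 2 (\<lambda>h. y h - sm h b)"
  shows "MO 3 (\<lambda>h. x h ** y h - sm (h^2) (a ** b))"
proof -
  have ha: "MO 1 (\<lambda>h. sm h a)"
  proof -
    have "MO (1+0) (\<lambda>h. sm h a)" by (rule MO_sm) (simp_all add: MO_const)
    then show ?thesis by simp
  qed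
  have "MO 3 (\<lambda>h. (x h - sm h a) ** y h)" by (rule MO_eqk[OF MO_mult[OF assms(3,2)]]) simp
  moreover have "MO 3 (\<lambda>h. sm h a ** (y h - sm h b))" by (rule MO_eqk[OF MO_mult[OF ha assms(4)]]) simp
  ultimately have "MO 3 (\<lambda>h. (x h - sm h a) ** y h + sm h a ** (y h - sm h b))"
    by (rule MO_add)
  moreover have "(x h - sm h a) ** y h + sm h a ** (y h - sm h b) = x h ** y h - sm (h^2) (a ** b)" for h
    by (simp add: mm_rdiff mm_ldiff sm_mml sm_mmr sm_sm power2_eq_square)
  ultimately show ?thesis by simp
qed

lemma expand3: "(mat 1 + x) ** (mat 1 + y) ** (mat 1 + (z::complex^'m^'m)) =
   mat 1 + x + y + z + x ** y + x ** z + y ** z + x ** y ** z"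
  by (simp add: mm_rdistrib matrix_add_ldistrib matrix_mul_assoc add_ac)

lemma lin_aux:
  fixes I a b c p q s t p' q' s' t' :: "'a::ab_group_add"
  assumes "I + a + b + c + p + q + s + t = I + c + b + a + s' + q' + p' + t'"
  shows "(p - p') + (q - q') + (s - s') = t' - t"
proof -
  have "(p - p') + (q - q') + (s - s') - (t' - t) = (I + a + b + c + p + q + s + t) - (I + c + b + a + s' + q' + p' + t')"
    by (simp add: algebra_simps)
  then show ?thesis using assms by simp
qed

theorem mainTheorem1:
  fixes F r :: "('n::finite) end2"
    and R :: "complex \<Rightarrow> 'n end2"
  assumes invF: "involutive_symmetry F"
    and family: "\<exists>e>0. (\<forall>i j. (\<lambda>q. R q $ i $ j) analytic_on ball 1 e) \<and>
                   (\<forall>q\<in>ball 1 e. q \<noteq> 1 \<longrightarrow> hecke_symmetry q (R q)) \<and>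
                   (\<forall>q\<in>ball 1 e. compatible (R q) F)"
    and R1: "R 1 = F"
    and expansion: "\<forall>i j. (\<lambda>h. (R (exp h) ** F) $ i $ j - mat 1 $ i $ j - h * r $ i $ j)
                         \<in> O[at 0](\<lambda>h. h ^ 2)"
  shows "r + bar21 F r = F + F \<and>
         commut (bar12 F r) (bar13 F r) + commut (bar12 F r) (bar23 F r)
           + commut (bar13 F r) (bar23 F r) = 0"
proof -
  obtain e where e: "e > 0" "\<forall>q\<in>ball 1 e. q \<noteq> 1 \<longrightarrow> hecke_symmetry q (R q)"
     "\<forall>q\<in>ball 1 e. compatible (R q) F" using family by blast
  have F2: "F ** F = mat 1" and Fbr: "braiding F" using invF by (auto simp: involutive_symmetry_def)
  have F2': "X ** F ** F = X" for X :: "'n end2" by (simp add: matrix_mul_assoc[symmetric] F2)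
  define x where "x = (\<lambda>h. R (exp h) ** F - mat 1)"
  have Rx: "R (exp h) = (mat 1 + x h) ** F" for h by (simp add: x_def F2')
  have ev: "eventually (\<lambda>h. hecke_symmetry (exp h) (R (exp h)) \<and> compatible (R (exp h)) F) (at 0)"
    using ev_exp[OF e(1)] by eventually_elim (use e in auto)
  have x2: "MO 2 (\<lambda>h. x h - sm h r)"
    using expansion unfolding MO_def x_def by simp
  have hr: "MO 1 (\<lambda>h. sm h r)"
  proof -
    have "MO (1+0) (\<lambda>h. sm h r)" by (rule MO_sm) (simp_all add: MO_const)
    then show ?thesis by simp
  qed
  have x1: "MO 1 x"
  proof -
    have "MO 1 (\<lambda>h. (x h - sm h r) + sm h r)" by (intro MO_add hr MO_mono[OF x2]) simp
    then show ?thesis by simp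
  qed
  have part1: "r + bar21 F r = F + F"
  proof -
    define c where "c = r + bar21 F r - (F + F)"
    define s where "s = (\<lambda>h::complex. exp h - inverse (exp h))"
    have s1: "s \<in> O[at 0](\<lambda>h. h^1)"
    proof -
      have A: "(\<lambda>h. exp h - inverse (exp h) - h - h) \<in> O[at 0](\<lambda>h::complex. h)"
        by (rule landau_o.small_imp_big[OF exp_small])
      have B: "(\<lambda>h::complex. 2 * h) \<in> O[at 0](\<lambda>h. h)" by simp
      have "(\<lambda>h. (exp h - inverse (exp h) - h - h) + 2 * h) \<in> O[at 0](\<lambda>h::complex. h)"
        by (rule sum_in_bigo(1)[OF A B])
      moreover have "(\<lambda>h. (exp h - inverse (exp h) - h - h) + 2 * h) = s" by (auto simp: s_def fun_eq_iff)
      ultimately show ?thesis by simp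
    qed
    define T where "T = (\<lambda>h. (sm h r - x h) + F ** (sm h r - x h) ** F - x h ** F ** x h ** F + sm (s h) (x h ** F))"
    have T2: "MO 2 T"
    proof -
      have a: "MO 2 (\<lambda>h. sm h r - x h)"
      proof -
        have "MO 2 (\<lambda>h. sm (-1) (x h - sm h r))" by (rule MO_eqk[OF MO_sm[of "\<lambda>_. -1" 0 2, OF _ x2]]) simp_all
        moreover have "sm (-1) (x h - sm h r) = sm h r - x h" for h by (simp add: vec_eq_iff)
        ultimately show ?thesis by simp
      qed
      have b: "MO 2 (\<lambda>h. F ** (sm h r - x h) ** F)" by (rule MO_eqk[OF MO_mult[OF MO_mult[OF MO_const a] MO_const]]) simp
      have c: "MO 2 (\<lambda>h. x h ** F ** x h ** F)" by (rule MO_eqk[OF MO_mult[OF MO_mult[OF MO_mult[OF x1 MO_const] x1] MO_const]]) simp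
      have d: "MO 2 (\<lambda>h. sm (s h) (x h ** F))" by (rule MO_eqk[OF MO_sm[OF s1 MO_mult[OF x1 MO_const]]]) simp
      show ?thesis unfolding T_def by (intro MO_add MO_diff a b c d)
    qed
    have eq: "eventually (\<lambda>h. sm h c = T h + sm (s h - h - h) F) (at 0)"
      using ev
    proof eventually_elim
      case (elim h)
      define X where "X = x h"
      define q where "q = exp h"
      have q0: "q * inverse q = 1" by (simp add: q_def)
      have H: "(R q - scal_id q) ** (R q + scal_id (inverse q)) = 0"
        using elim unfolding hecke_symmetry_def q_def by simp
      have "R q ** R q - mat 1 = sm (s h) (R q)"
      proof -
        have E1: "(R q - scal_id q) ** (R q + scal_id (inverse q)) =
              R q ** R q + sm (inverse q) (R q) - (sm q (R q) + sm (q * inverse q) (mat 1))"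
          by (simp only: scal_id_sm mm_rdiff matrix_add_ldistrib sm_mml sm_mmr sm_sm matrix_mul_lid matrix_mul_rid sm_diff) (simp add: algebra_simps)
        have "R q ** R q - mat 1 = (R q ** R q + sm (inverse q) (R q) - (sm q (R q) + sm (q * inverse q) (mat 1)))
            + (sm q (R q) - sm (inverse q) (R q))"
          using q0 by (simp add: algebra_simps sm_one)
        also have "\<dots> = sm (q - inverse q) (R q)" using E1 H by (simp add: sm_diffl)
        finally show ?thesis by (simp add: s_def q_def)
      qed
      then have H': "X + F ** X ** F + X ** F ** X ** F = sm (s h) F + sm (s h) (X ** F)"
        using Rx[of h] unfolding q_def X_def
        by (simp add: mm_rdistrib matrix_add_ldistrib matrix_mul_assoc F2 F2' sm_add algebra_simps)
      have "sm h c - (T h + sm (s h - h - h) F) =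
            (X + F ** X ** F + X ** F ** X ** F) - (sm (s h) F + sm (s h) (X ** F))"
        unfolding c_def T_def bar21_def X_def[symmetric]
        by (simp only: sm_add sm_diff sm_diffl mm_rdiff mm_ldiff sm_mml sm_mmr) (rule ag1)
      then show ?case using H' by simp
    qed
    have "c $ i $ j = 0" for i j
    proof -
      have "(\<lambda>h. T h $ i $ j) \<in> O[at 0](\<lambda>h. h^2)" using T2 unfolding MO_def by blast
      then have "(\<lambda>h. T h $ i $ j) \<in> o[at 0](\<lambda>h. h)" using landau_o.big_small_trans h2_small by blast
      moreover have "(\<lambda>h. (s h - h - h) * F $ i $ j) \<in> o[at 0](\<lambda>h. h)"
        using exp_small by (simp add: s_def)
      ultimately have sm_o: "(\<lambda>h. T h $ i $ j + (s h - h - h) * F $ i $ j) \<in> o[at 0](\<lambda>h. h)"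
        by (rule sum_in_smallo)
      have ev3: "eventually (\<lambda>h. T h $ i $ j + (s h - h - h) * F $ i $ j = h * c $ i $ j) (at 0)"
        using eq
      proof eventually_elim
        case (elim h)
        then have "(sm h c) $ i $ j = (T h + sm (s h - h - h) F) $ i $ j" by simp
        then show ?case by simp
      qed
      have "(\<lambda>h. h * c $ i $ j) \<in> o[at 0](\<lambda>h. h)"
        by (rule iffD1[OF landau_o.small.in_cong[OF ev3] sm_o])
      then have "(\<lambda>h. c $ i $ j * h) \<in> o[at 0](\<lambda>h. h)" by (simp only: mult.commute)
      then show ?thesis using h_notin unfolding cmult_in_smallo_iff by blast
    qed
    then have "c = 0" by (simp add: vec_eq_iff)
    then show ?thesis by (simp add: c_def)
  qed
  have part2: "commut (bar12 F r) (bar13 F r) + commut (bar12 F r) (bar23 F r)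
           + commut (bar13 F r) (bar23 F r) = 0"
  proof -
    define s1 where "s1 = leg12 F"
    define s2 where "s2 = leg23 F"
    have s11: "s1 ** s1 = mat 1" unfolding s1_def by (simp add: leg12_mult[symmetric] F2 leg12_one)
    have s22: "s2 ** s2 = mat 1" unfolding s2_def by (simp add: leg23_mult[symmetric] F2 leg23_one)
    have inv1: "matrix_inv s1 = s1" by (rule inv_invol[OF s11])
    have inv2: "matrix_inv s2 = s2" by (rule inv_invol[OF s22])
    have bar_TT: "bar12 F X = TT (mat 1) (mat 1) X" "bar13 F X = TT s2 s2 X"
       "bar23 F X = TT (s1 ** s2) (s2 ** s1) X" for X
      unfolding bar12_def bar13_def bar23_def TT_def inv1 inv2 s1_def[symmetric] s2_def[symmetric]
      by (simp_all add: matrix_mul_assoc)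
    have TTI: "TT C D (mat 1 + X) = mat 1 + TT C D X" if "C ** D = mat 1" for C D X
      using that by (simp add: TT_def leg12_add leg12_one mm_rdistrib matrix_add_ldistrib)
    have TTx1: "MO 1 (\<lambda>h. TT C D (x h))" for C D unfolding TT_def by (rule MO_T[OF x1])
    have TTx2: "MO 2 (\<lambda>h. TT C D (x h) - sm h (TT C D r))" for C D
      unfolding TT_lin[symmetric] unfolding TT_def by (rule MO_T[OF x2])
    define C1 where "C1 = (mat 1 :: 'n end3)"
    define D1 where "D1 = (mat 1 :: 'n end3)"
    define C2 where "C2 = s2"
    define D2 where "D2 = s2"
    define C3 where "C3 = s1 ** s2"
    define D3 where "D3 = s2 ** s1"
    have CD: "C1 ** D1 = mat 1" "C2 ** D2 = mat 1" "C3 ** D3 = mat 1"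
      unfolding C1_def D1_def C2_def D2_def C3_def D3_def
      by (simp_all add: s22 matrix_mul_assoc) (metis matrix_mul_assoc matrix_mul_rid s11 s22)
    define y1 where "y1 = (\<lambda>h. TT C1 D1 (x h))"
    define y2 where "y2 = (\<lambda>h. TT C2 D2 (x h))"
    define y3 where "y3 = (\<lambda>h. TT C3 D3 (x h))"
    define a1 where "a1 = TT C1 D1 r"
    define a2 where "a2 = TT C2 D2 r"
    define a3 where "a3 = TT C3 D3 r"
    have K: "commut (bar12 F r) (bar13 F r) + commut (bar12 F r) (bar23 F r)
           + commut (bar13 F r) (bar23 F r) = commut a1 a2 + commut a1 a3 + commut a2 a3"
      unfolding bar_TT a1_def a2_def a3_def C1_def D1_def C2_def D2_def C3_def D3_def ..
    have P: "eventually (\<lambda>h. (mat 1 + y1 h) ** (mat 1 + y2 h) ** (mat 1 + y3 h) =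
                           (mat 1 + y3 h) ** (mat 1 + y2 h) ** (mat 1 + y1 h)) (at 0)"
      using ev
    proof eventually_elim
      case (elim h)
      have br: "braiding (R (exp h))" using elim by (simp add: hecke_symmetry_def)
      have Q: "leg12 (R (exp h) ** F) ** bar13 F (R (exp h) ** F) ** bar23 F (R (exp h) ** F) =
               bar23 F (R (exp h) ** F) ** bar13 F (R (exp h) ** F) ** leg12 (R (exp h) ** F)"
        by (rule qybe[OF F2 Fbr _ ]) (use br elim in \<open>auto simp: braiding_def\<close>)
      have E: "R (exp h) ** F = mat 1 + x h" by (simp add: x_def)
      have "leg12 (R (exp h) ** F) = mat 1 + y1 h" "bar13 F (R (exp h) ** F) = mat 1 + y2 h"
           "bar23 F (R (exp h) ** F) = mat 1 + y3 h"
        unfolding E y1_def y2_def y3_def bar_TT(2,3) C2_def D2_def C3_def D3_def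
          apply (simp add: leg12_add leg12_one TT_def C1_def D1_def)
        using TTI CD unfolding C2_def D2_def C3_def D3_def by auto
      then show ?case using Q by simp
    qed
    have comm: "eventually (\<lambda>h. commut (y1 h) (y2 h) + commut (y1 h) (y3 h) + commut (y2 h) (y3 h)
        = y3 h ** y2 h ** y1 h - y1 h ** y2 h ** y3 h) (at 0)"
      using P
    proof eventually_elim
      case (elim h)
      show ?case unfolding commut_def
        by (rule lin_aux[where I="mat 1"]) (use elim in \<open>simp only: expand3\<close>)
    qed
    have y1: "MO 1 y1" "MO 1 y2" "MO 1 y3" unfolding y1_def y2_def y3_def by (rule TTx1)+
    have y2: "MO 2 (\<lambda>h. y1 h - sm h a1)" "MO 2 (\<lambda>h. y2 h - sm h a2)" "MO 2 (\<lambda>h. y3 h - sm h a3)"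
      unfolding y1_def y2_def y3_def a1_def a2_def a3_def by (rule TTx2)+
    have trip: "MO 3 (\<lambda>h. y3 h ** y2 h ** y1 h - y1 h ** y2 h ** y3 h)"
    proof -
      have "MO 3 (\<lambda>h. y3 h ** y2 h ** y1 h)" by (rule MO_eqk[OF MO_mult[OF MO_mult[OF y1(3) y1(2)] y1(1)]]) simp
      moreover have "MO 3 (\<lambda>h. y1 h ** y2 h ** y3 h)" by (rule MO_eqk[OF MO_mult[OF MO_mult[OF y1(1) y1(2)] y1(3)]]) simp
      ultimately show ?thesis by (rule MO_diff)
    qed
    have Cm: "MO 3 (\<lambda>h. commut (y1 h) (y2 h) + commut (y1 h) (y3 h) + commut (y2 h) (y3 h))"
      by (rule MO_cong[OF eventually_mono[OF comm] trip]) simp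
    have pr: "MO 3 (\<lambda>h. y1 h ** y2 h - sm (h^2) (a1 ** a2))" "MO 3 (\<lambda>h. y2 h ** y1 h - sm (h^2) (a2 ** a1))"
      "MO 3 (\<lambda>h. y1 h ** y3 h - sm (h^2) (a1 ** a3))" "MO 3 (\<lambda>h. y3 h ** y1 h - sm (h^2) (a3 ** a1))"
      "MO 3 (\<lambda>h. y2 h ** y3 h - sm (h^2) (a2 ** a3))" "MO 3 (\<lambda>h. y3 h ** y2 h - sm (h^2) (a3 ** a2))"
      by (intro prod2_MO y1 y2)+
    have diffm: "MO 3 (\<lambda>h. ((y1 h ** y2 h - sm (h^2) (a1 ** a2)) - (y2 h ** y1 h - sm (h^2) (a2 ** a1)))
       + ((y1 h ** y3 h - sm (h^2) (a1 ** a3)) - (y3 h ** y1 h - sm (h^2) (a3 ** a1)))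
       + ((y2 h ** y3 h - sm (h^2) (a2 ** a3)) - (y3 h ** y2 h - sm (h^2) (a3 ** a2))))"
      by (intro MO_add MO_diff pr)
    have "MO 3 (\<lambda>h. (commut (y1 h) (y2 h) + commut (y1 h) (y3 h) + commut (y2 h) (y3 h)) -
       (((y1 h ** y2 h - sm (h^2) (a1 ** a2)) - (y2 h ** y1 h - sm (h^2) (a2 ** a1)))
       + ((y1 h ** y3 h - sm (h^2) (a1 ** a3)) - (y3 h ** y1 h - sm (h^2) (a3 ** a1)))
       + ((y2 h ** y3 h - sm (h^2) (a2 ** a3)) - (y3 h ** y2 h - sm (h^2) (a3 ** a2)))))"
      by (rule MO_diff[OF Cm diffm])
    moreover have "\<And>h. (commut (y1 h) (y2 h) + commut (y1 h) (y3 h) + commut (y2 h) (y3 h)) -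
       (((y1 h ** y2 h - sm (h^2) (a1 ** a2)) - (y2 h ** y1 h - sm (h^2) (a2 ** a1)))
       + ((y1 h ** y3 h - sm (h^2) (a1 ** a3)) - (y3 h ** y1 h - sm (h^2) (a3 ** a1)))
       + ((y2 h ** y3 h - sm (h^2) (a2 ** a3)) - (y3 h ** y2 h - sm (h^2) (a3 ** a2))))
       = sm (h^2) (commut a1 a2 + commut a1 a3 + commut a2 a3)"
      by (simp add: commut_def sm_add sm_diff algebra_simps)
    ultimately have "MO 3 (\<lambda>h. sm (h^2) (commut a1 a2 + commut a1 a3 + commut a2 a3))" by simp
    then show ?thesis unfolding K by (rule MO3_zero)
  qed
  show ?thesis using part1 part2 by simp
qed


end
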